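(* Let $\mathcal{O}$ be an order in a number field $K$, and let $\mathfrak{m}_1,\mathfrak{m}_2$ be nonzero integral ideals of $\mathcal{O}$. Then: (1) $\{\mathfrak p \text{ prime}:\mathfrak{m}_1\subseteq\mathfrak{p}\}\subseteq\{\mathfrak p\text{ prime}:\mathfrak{m}_2\subseteq\mathfrak{p}\}$ if and only if $I_{\mathfrak{m}_2}(\mathcal{O})\subseteq I_{\mathfrak{m}_1}(\mathcal{O})$; (2) if $I_{\mathfrak{m}_2}(\mathcal{O})\subseteq I_{\mathfrak{m}_1}(\mathcal{O})$, then $J^*_{\mathfrak{m}_2}(\mathcal{O})\subseteq J^*_{\mathfrak{m}_1}(\mathcal{O})$; (3) for any nonzero $\mathcal{O}$-ideal $\mathfrak{m}$ there exists an invertible integral ideal $\widetilde{\mathfrak{m}}\in I^*(\mathcal{O})$ with $\widetilde{\mathfrak{m}}\subseteq\mathfrak{m}$ and $I_{\mathfrak{m}}(\mathcal{O})=I_{\widetilde{\mathfrak{m}}}(\mathcal{O})$ (and hence $J^*_{\mathfrak{m}}(\mathcal{O})=J^*_{\widetilde{\mathfrak{m}}}(\mathcal{O})$).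
   Context: An order is a subring of $K$ containing $1$ that is free of rank $[K:\mathbb Q]$ over $\mathbb Z$. In (1), $\mathfrak p$ ranges over prime ideals of $\mathcal O$. $I_{\mathfrak m}(\mathcal O)$ is the set of integral $\mathcal O$-ideals $\mathfrak a$ with $\mathfrak a+\mathfrak m=\mathcal O$; $I^*(\mathcal O)$ is the set of invertible integral ideals (integral $\mathfrak a$ with $\mathfrak a\mathfrak b=\gamma\mathcal O$ for some integral $\mathfrak b$ and nonzero $\gamma$). $J^*_{\mathfrak m}(\mathcal O)$ is the group of invertible fractional $\mathcal O$-ideals coprime to $\mathfrak m$, i.e. of the form $\mathfrak a\mathfrak b^{-1}$ with $\mathfrak a,\mathfrak b$ invertible integral ideals coprime to $\mathfrak m$ (fractional ideal: $\mathcal O$-submodule $\mathfrak a\subseteq K$ with $\lambda\mathfrak a\subseteq\mathcal O$ for some $\lambda\in K^\times$; invertible: $\mathfrak a\mathfrak b=\mathcal O$ for a fractional $\mathfrak b$). *)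

theory Defs
  imports Complex_Main
begin

text \<open>Number fields are modelled as subfields of the complex numbers (every number field
  embeds into \<complex>). Orders, ideals and fractional ideals are sets of complex numbers.\<close>

definition subfield :: "complex set \<Rightarrow> bool" where
  "subfield K \<longleftrightarrow> 0 \<in> K \<and> 1 \<in> K \<and>
     (\<forall>x\<in>K. \<forall>y\<in>K. x + y \<in> K \<and> x - y \<in> K \<and> x * y \<in> K) \<and>
     (\<forall>x\<in>K. x \<noteq> 0 \<longrightarrow> inverse x \<in> K)"

definition rat_basis :: "complex set \<Rightarrow> nat \<Rightarrow> (nat \<Rightarrow> complex) \<Rightarrow> bool" where
  "rat_basis K n b \<longleftrightarrow> (\<forall>i<n. b i \<in> K) \<and>
     (\<forall>c :: nat \<Rightarrow> rat. (\<Sum>i<n. of_rat (c i) * b i) = 0 \<longrightarrow> (\<forall>i<n. c i = 0)) \<and>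
     K = range (\<lambda>c :: nat \<Rightarrow> rat. \<Sum>i<n. of_rat (c i) * b i)"

definition int_basis :: "complex set \<Rightarrow> nat \<Rightarrow> (nat \<Rightarrow> complex) \<Rightarrow> bool" where
  "int_basis \<O> n b \<longleftrightarrow>
     (\<forall>c :: nat \<Rightarrow> int. (\<Sum>i<n. of_int (c i) * b i) = 0 \<longrightarrow> (\<forall>i<n. c i = 0)) \<and>
     \<O> = range (\<lambda>c :: nat \<Rightarrow> int. \<Sum>i<n. of_int (c i) * b i)"

definition number_field :: "complex set \<Rightarrow> bool" where
  "number_field K \<longleftrightarrow> subfield K \<and> (\<exists>n b. rat_basis K n b)"

definition order_in :: "complex set \<Rightarrow> complex set \<Rightarrow> bool" where
  "order_in \<O> K \<longleftrightarrow> \<O> \<subseteq> K \<and> 0 \<in> \<O> \<and> 1 \<in> \<O> \<and>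
     (\<forall>x\<in>\<O>. \<forall>y\<in>\<O>. x + y \<in> \<O> \<and> x - y \<in> \<O> \<and> x * y \<in> \<O>) \<and>
     (\<exists>n b b'. int_basis \<O> n b \<and> rat_basis K n b')"

definition ideal_of :: "complex set \<Rightarrow> complex set \<Rightarrow> bool" where
  "ideal_of \<O> I \<longleftrightarrow> I \<subseteq> \<O> \<and> 0 \<in> I \<and> (\<forall>x\<in>I. \<forall>y\<in>I. x + y \<in> I) \<and>
     (\<forall>r\<in>\<O>. \<forall>x\<in>I. r * x \<in> I)"

definition prime_ideal_of :: "complex set \<Rightarrow> complex set \<Rightarrow> bool" where
  "prime_ideal_of \<O> P \<longleftrightarrow> ideal_of \<O> P \<and> P \<noteq> \<O> \<and>
     (\<forall>x\<in>\<O>. \<forall>y\<in>\<O>. x * y \<in> P \<longrightarrow> x \<in> P \<or> y \<in> P)"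

definition set_sum :: "complex set \<Rightarrow> complex set \<Rightarrow> complex set" where
  "set_sum A B = {x + y | x y. x \<in> A \<and> y \<in> B}"

definition fideal_prod :: "complex set \<Rightarrow> complex set \<Rightarrow> complex set" where
  "fideal_prod A B = {(\<Sum>i<n. x i * y i) | (n::nat) x y. \<forall>i<n. x i \<in> A \<and> y i \<in> B}"

definition principal :: "complex set \<Rightarrow> complex \<Rightarrow> complex set" where
  "principal \<O> \<gamma> = {\<gamma> * x | x. x \<in> \<O>}"

definition I_coprime :: "complex set \<Rightarrow> complex set \<Rightarrow> complex set set" where
  "I_coprime \<O> m = {a. ideal_of \<O> a \<and> set_sum a m = \<O>}"

definition I_inv :: "complex set \<Rightarrow> complex set set" where
  "I_inv \<O> = {a. ideal_of \<O> a \<and>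
     (\<exists>b \<gamma>. ideal_of \<O> b \<and> \<gamma> \<noteq> 0 \<and> fideal_prod a b = principal \<O> \<gamma>)}"

definition frac_ideal :: "complex set \<Rightarrow> complex set \<Rightarrow> complex set \<Rightarrow> bool" where
  "frac_ideal \<O> K A \<longleftrightarrow> A \<subseteq> K \<and> 0 \<in> A \<and> (\<forall>x\<in>A. \<forall>y\<in>A. x + y \<in> A) \<and>
     (\<forall>r\<in>\<O>. \<forall>x\<in>A. r * x \<in> A) \<and> (\<exists>l\<in>K. l \<noteq> 0 \<and> (\<forall>x\<in>A. l * x \<in> \<O>))"

text \<open>Inverse of a fractional ideal: \<open>(\<O> : B) = {x \<in> K. x B \<subseteq> \<O>}\<close>
  (this is \<open>B\<^sup>-\<^sup>1\<close> when \<open>B\<close> is invertible).\<close>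
definition frac_inv :: "complex set \<Rightarrow> complex set \<Rightarrow> complex set \<Rightarrow> complex set" where
  "frac_inv \<O> K B = {x \<in> K. \<forall>y\<in>B. x * y \<in> \<O>}"

definition J_coprime :: "complex set \<Rightarrow> complex set \<Rightarrow> complex set \<Rightarrow> complex set set" where
  "J_coprime \<O> K m = {fideal_prod a (frac_inv \<O> K b) | a b.
     a \<in> I_inv \<O> \<and> a \<in> I_coprime \<O> m \<and> b \<in> I_inv \<O> \<and> b \<in> I_coprime \<O> m}"

end

theory Submission
  imports Defs
begin

definition rsc :: "rat \<Rightarrow> complex \<Rightarrow> complex" where "rsc r z = of_rat r * z"

interpretation QV: vector_space rsc
  by unfold_locales (auto simp: rsc_def algebra_simps of_rat_add of_rat_mult)

lemma ring_O:
  assumes "order_in R K"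
  shows "0 \<in> R" "1 \<in> R" "\<And>x y. x \<in> R \<Longrightarrow> y \<in> R \<Longrightarrow> x + y \<in> R"
    "\<And>x y. x \<in> R \<Longrightarrow> y \<in> R \<Longrightarrow> x - y \<in> R"
    "\<And>x y. x \<in> R \<Longrightarrow> y \<in> R \<Longrightarrow> x * y \<in> R" "R \<subseteq> K"
  using assms unfolding order_in_def by auto

lemma O_uminus: assumes a: "order_in R K" "x \<in> R" shows "- x \<in> R"
  using ring_O(1)[OF a(1)] ring_O(4)[OF a(1), of 0 x] a(2) by simp

lemma O_int: "order_in R K \<Longrightarrow> of_int k \<in> R"
proof (induction k rule: int_induct[where k=0])
  case base then show ?case using ring_O by simp
next
  case (step1 i) then show ?case using ring_O(2,3)[of R K] by (simp add: add.commute)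
next
  case (step2 i) then show ?case using ring_O(2,4)[of R K] by simp
qed

lemma O_pow: "order_in R K \<Longrightarrow> x \<in> R \<Longrightarrow> x ^ n \<in> R"
  by (induction n) (auto intro: ring_O)

lemma O_sum: "order_in R K \<Longrightarrow> (\<And>i. i \<in> A \<Longrightarrow> f i \<in> R) \<Longrightarrow> sum f A \<in> R"
  by (induction A rule: infinite_finite_induct) (auto intro: ring_O)

lemma int_rel_shift:
  assumes R: "order_in R K" and x: "x \<in> R" "x \<noteq> 0"
  shows "(\<Sum>i\<le>n. of_int (a i) * x ^ i) = 0 \<Longrightarrow> (\<exists>i\<le>n. a i \<noteq> 0) \<Longrightarrow>
     \<exists>D w. D \<noteq> (0::int) \<and> w \<in> R \<and> of_int D = x * w"
proof (induction n arbitrary: a)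
  case 0 then show ?case using x by auto
next
  case (Suc n)
  have split: "(\<Sum>i\<le>Suc n. of_int (a i) * x ^ i) = of_int (a 0) + x * (\<Sum>i\<le>n. of_int (a (Suc i)) * x ^ i)"
    by (subst sum.atMost_Suc_shift) (simp add: sum_distrib_left algebra_simps del: sum.atMost_Suc)
  show ?case
  proof (cases "a 0 = 0")
    case False
    have "of_int (a 0) = x * (- (\<Sum>i\<le>n. of_int (a (Suc i)) * x ^ i))"
      using Suc.prems(1) split by (simp add: add_eq_0_iff)
    moreover have "- (\<Sum>i\<le>n. of_int (a (Suc i)) * x ^ i) \<in> R"
      by (intro O_uminus[OF R] O_sum[OF R] ring_O(5)[OF R] O_int[OF R] O_pow[OF R x(1)])
    ultimately show ?thesis using False by blast
  next
    case True
    then have "(\<Sum>i\<le>n. of_int (a (Suc i)) * x ^ i) = 0" using Suc.prems(1) split x by simp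
    moreover obtain i where "i \<le> Suc n" "a i \<noteq> 0" using Suc.prems(2) by blast
    then have "\<exists>i\<le>n. a (Suc i) \<noteq> 0" using True by (cases i) auto
    ultimately show ?thesis using Suc.IH[of "\<lambda>i. a (Suc i)"] by simp
  qed
qed

lemma rat_rel:
  assumes O: "order_in R K" and x: "x \<in> R" "x \<noteq> 0"
    and rel: "(\<Sum>i\<le>n. of_rat (c i) * x ^ i) = 0" and nz: "\<exists>i\<le>n. c i \<noteq> 0"
  shows "\<exists>D w. D \<noteq> (0::int) \<and> w \<in> R \<and> of_int D = x * w"
proof -
  define p where "p i = fst (quotient_of (c i))" for i
  define q where "q i = snd (quotient_of (c i))" for i
  have qpos: "q i > 0" for i unfolding q_def using quotient_of_denom_pos[of "c i"]
    by (metis prod.collapse)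
  have cpq: "c i = of_int (p i) / of_int (q i)" for i
    unfolding p_def q_def using quotient_of_div[of "c i"] by (metis prod.collapse)
  define d where "d = (\<Prod>i\<le>n. q i)"
  define a where "a i = p i * (\<Prod>j\<in>{..n}-{i}. q j)" for i
  have dpos: "d > 0" unfolding d_def using qpos by (simp add: prod_pos)
  have ai: "of_int (a i) = of_int d * c i" if "i \<le> n" for i
  proof -
    have "d = q i * (\<Prod>j\<in>{..n}-{i}. q j)" unfolding d_def
      using that by (simp add: prod.remove)
    then show ?thesis unfolding a_def cpq using qpos[of i]
      by (simp add: field_simps)
  qed
  have "(\<Sum>i\<le>n. of_int (a i) * x ^ i) = (\<Sum>i\<le>n. of_rat (of_int d) * (of_rat (c i) * x ^ i))"
  proof (intro sum.cong refl)
    fix i assume "i \<in> {..n}"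
    then have eq: "(of_rat (of_int (a i)) :: complex) = of_rat (of_int d * c i)"
      using ai[of i] by simp
    have "of_rat (of_int d) * of_rat (c i) = (of_rat (of_int (a i)) :: complex)"
      unfolding eq of_rat_mult by simp
    then show "of_int (a i) * x ^ i = of_rat (of_int d) * (of_rat (c i) * x ^ i)"
      by (simp add: mult.assoc[symmetric])
  qed
  also have "\<dots> = of_rat (of_int d) * (\<Sum>i\<le>n. of_rat (c i) * x ^ i)"
    by (simp add: sum_distrib_left)
  finally have "(\<Sum>i\<le>n. of_int (a i) * x ^ i) = 0" using rel by simp
  moreover have "\<exists>i\<le>n. a i \<noteq> 0"
  proof -
    obtain i where "i \<le> n" "c i \<noteq> 0" using nz by blast
    then have "(of_int (a i) :: rat) \<noteq> 0" using ai[of i] dpos by simp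
    then show ?thesis using \<open>i \<le> n\<close> by auto
  qed
  ultimately show ?thesis using int_rel_shift[OF O x] by blast
qed

lemma int_in_principal:
  assumes O: "order_in R K" and x: "x \<in> R" "x \<noteq> 0"
  shows "\<exists>D w. D \<noteq> (0::int) \<and> w \<in> R \<and> of_int D = x * w"
proof -
  obtain n b b' where ib: "int_basis R n b" and rb: "rat_basis K n b'"
    using O unfolding order_in_def by blast
  show ?thesis
  proof (cases "inj_on (\<lambda>i. x ^ i) {..n}")
    case False
    then obtain i j where ij: "i \<le> n" "j \<le> n" "i \<noteq> j" "x ^ i = x ^ j"
      unfolding inj_on_def by blast
    have "\<exists>i j. i < j \<and> x ^ i = x ^ j"
      using ij by (metis linorder_neqE_nat)
    then obtain i j where ij: "i < j" "x ^ i = x ^ j" by blast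
    have "x ^ j = x ^ i * x ^ (j - i)" using ij(1) by (simp add: power_add[symmetric])
    then have "x ^ (j - i) = 1" using ij(2) x(2) by simp
    moreover have "x ^ (j - i) = x * x ^ (j - i - 1)" using ij(1)
      by (metis Suc_diff_Suc diff_Suc_1 diff_diff_left power_Suc zero_less_diff)
    ultimately have "of_int 1 = x * x ^ (j - i - 1)" by simp
    then show ?thesis using O_pow[OF O x(1)] by (metis one_neq_zero)
  next
    case True
    define S where "S = (\<lambda>i. x ^ i) ` {..n}"
    have cS: "card S = Suc n" unfolding S_def using True by (simp add: card_image)
    have fS: "finite S" unfolding S_def by simp
    have "S \<subseteq> QV.span (b' ` {..<n})"
    proof
      fix v assume "v \<in> S"
      then have "v \<in> K" unfolding S_def using O_pow[OF O x(1)] ring_O(6)[OF O] by auto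
      then obtain c where "v = (\<Sum>i<n. of_rat (c i) * b' i)"
        using rb unfolding rat_basis_def by blast
      then have "v = (\<Sum>i<n. rsc (c i) (b' i))" by (simp add: rsc_def)
      moreover have "(\<Sum>i<n. rsc (c i) (b' i)) \<in> QV.span (b' ` {..<n})"
        by (rule QV.span_sum, rule QV.span_scale, rule QV.span_base) auto
      ultimately show "v \<in> QV.span (b' ` {..<n})" by simp
    qed
    moreover have "card (b' ` {..<n}) \<le> n" using card_image_le[of "{..<n}" b'] by simp
    ultimately have "QV.dependent S"
      using QV.independent_span_bound[of "b' ` {..<n}" S] cS by auto
    then obtain u where u: "\<exists>v\<in>S. u v \<noteq> 0" "(\<Sum>v\<in>S. rsc (u v) v) = 0"
      using QV.dependent_finite[OF fS] by blast
    have "(\<Sum>i\<le>n. of_rat (u (x ^ i)) * x ^ i) = 0"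
      using u(2) unfolding S_def by (simp add: sum.reindex[OF True] rsc_def)
    moreover have "\<exists>i\<le>n. u (x ^ i) \<noteq> 0" using u(1) unfolding S_def by auto
    ultimately show ?thesis using rat_rel[OF O x, of "\<lambda>i. u (x ^ i)" n] by blast
  qed
qed

definition cg :: "complex set \<Rightarrow> int \<Rightarrow> complex \<Rightarrow> complex \<Rightarrow> bool" where
  "cg R M x y \<longleftrightarrow> (\<exists>w\<in>R. x - y = of_int M * w)"

lemma finite_reps:
  assumes O: "order_in R K" and M: "M > 0"
  shows "\<exists>F. finite F \<and> F \<subseteq> R \<and> (\<forall>y\<in>R. \<exists>f\<in>F. cg R M y f)"
proof -
  obtain n b b' where ib: "int_basis R n b"
    using O unfolding order_in_def by blast
  then have Rr: "R = range (\<lambda>c :: nat \<Rightarrow> int. \<Sum>i<n. of_int (c i) * b i)"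
    unfolding int_basis_def by blast
  define F where "F = (\<lambda>l. \<Sum>i<n. of_int (l ! i) * b i) ` {l. set l \<subseteq> {0..<M} \<and> length l = n}"
  have "finite F" unfolding F_def by (intro finite_imageI finite_lists_length_eq) auto
  moreover have "F \<subseteq> R" unfolding F_def by (subst Rr) auto
  moreover have "\<exists>f\<in>F. cg R M y f" if "y \<in> R" for y
  proof -
    obtain c where y: "y = (\<Sum>i<n. of_int (c i) * b i)" using \<open>y \<in> R\<close> by (subst (asm) Rr) auto
    define l where "l = map (\<lambda>i. c i mod M) [0..<n]"
    have l: "set l \<subseteq> {0..<M} \<and> length l = n" unfolding l_def using M by auto
    define f where "f = (\<Sum>i<n. of_int (l ! i) * b i)"
    have fF: "f \<in> F" unfolding F_def f_def using l by blast
    have f: "f = (\<Sum>i<n. of_int (c i mod M) * b i)" unfolding f_def l_def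
      by (intro sum.cong refl) auto
    have "y - f = (\<Sum>i<n. of_int (c i - c i mod M) * b i)"
      unfolding y f by (simp add: sum_subtractf[symmetric] algebra_simps)
    also have "\<dots> = of_int M * (\<Sum>i<n. of_int (c i div M) * b i)"
      by (simp add: minus_mod_eq_mult_div sum_distrib_left mult.assoc)
    finally have "cg R M y f" unfolding cg_def by (subst Rr) auto
    with fF show ?thesis by blast
  qed
  ultimately show ?thesis by blast
qed

lemma cg_refl: "order_in R K \<Longrightarrow> cg R M x x"
  unfolding cg_def using ring_O(1) by fastforce

lemma cg_sym: "order_in R K \<Longrightarrow> cg R M x y \<Longrightarrow> cg R M y x"
  unfolding cg_def by (metis O_uminus minus_diff_eq mult_minus_right)

lemma cg_trans: "order_in R K \<Longrightarrow> cg R M x y \<Longrightarrow> cg R M y z \<Longrightarrow> cg R M x z"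
  unfolding cg_def
proof (elim bexE)
  fix w v assume O: "order_in R K" and w: "w \<in> R" "x - y = of_int M * w" and v: "v \<in> R" "y - z = of_int M * v"
  have "x - z = of_int M * (w + v)" using w v by (simp add: algebra_simps)
  then show "\<exists>w\<in>R. x - z = of_int M * w" using ring_O(3)[OF O w(1) v(1)] by blast
qed

lemma cg_mult: "order_in R K \<Longrightarrow> r \<in> R \<Longrightarrow> cg R M x y \<Longrightarrow> cg R M (r * x) (r * y)"
  unfolding cg_def
proof (elim bexE)
  fix w assume O: "order_in R K" and r: "r \<in> R" and w: "w \<in> R" "x - y = of_int M * w"
  have "r * x - r * y = of_int M * (r * w)" using w by (simp add: algebra_simps right_diff_distrib[symmetric])
  then show "\<exists>w\<in>R. r * x - r * y = of_int M * w" using ring_O(5)[OF O r w(1)] by blast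
qed

lemma cg_pow: assumes O: "order_in R K" and xy: "x \<in> R" "y \<in> R" "cg R M x y"
  shows "cg R M (x ^ k) (y ^ k)"
proof (induction k)
  case 0 then show ?case using cg_refl[OF O] by simp
next
  case (Suc k)
  have "cg R M (x * x ^ k) (x * y ^ k)" using cg_mult[OF O xy(1) Suc] .
  moreover have "cg R M (y ^ k * x) (y ^ k * y)" using cg_mult[OF O O_pow[OF O xy(2)] xy(3)] .
  ultimately show ?case using cg_trans[OF O] by (simp add: mult.commute)
qed

lemma idem_pow:
  assumes O: "order_in R K" and M: "M > 0" and a: "a \<in> R"
  shows "\<exists>n\<ge>1. cg R M (a ^ (2 * n)) (a ^ n)"
proof -
  obtain F where F: "finite F" "F \<subseteq> R" "\<forall>y\<in>R. \<exists>f\<in>F. cg R M y f"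
    using finite_reps[OF O M] by blast
  define g where "g k = (SOME f. f \<in> F \<and> cg R M (a ^ k) f)" for k
  have g: "g k \<in> F \<and> cg R M (a ^ k) (g k)" for k
    unfolding g_def by (rule someI_ex) (use F(3) O_pow[OF O a] in blast)
  have "\<not> inj g"
  proof
    assume "inj g"
    then have "finite (UNIV :: nat set)" using F(1) g
      by (metis finite_imageD finite_subset image_subsetI inj_on_subset subset_UNIV)
    then show False by simp
  qed
  then obtain i j where ij0: "g i = g j" "i \<noteq> j" unfolding inj_def by blast
  then obtain i j where ij: "g i = g j" "i < j" by (metis linorder_neqE_nat)
  have cij: "cg R M (a ^ i) (a ^ j)" using g[of i] g[of j] ij(1) cg_sym[OF O] cg_trans[OF O] by metis
  define p where "p = j - i"
  have p: "p > 0" "j = i + p" using ij unfolding p_def by auto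
  have step: "cg R M (a ^ (k + p)) (a ^ k)" if "k \<ge> i" for k
  proof -
    have "cg R M (a ^ (k - i) * a ^ j) (a ^ (k - i) * a ^ i)"
      using cg_mult[OF O O_pow[OF O a] cg_sym[OF O cij]] .
    then show ?thesis using that p by (simp add: power_add[symmetric])
  qed
  have many: "cg R M (a ^ (k + p * q)) (a ^ k)" if "k \<ge> i" for k q
  proof (induction q)
    case 0 then show ?case using cg_refl[OF O] by simp
  next
    case (Suc q)
    have "cg R M (a ^ (k + p * q + p)) (a ^ (k + p * q))" using step[of "k + p * q"] that by simp
    then show ?case using Suc cg_trans[OF O] by (metis add.assoc add.commute mult_Suc_right)
  qed
  define n where "n = p * (i + 1)"
  have "n \<ge> 1" "n \<ge> i" using p unfolding n_def by (auto simp: Suc_le_eq) (metis One_nat_def Suc_le_eq add.commute mult_le_mono1 mult_Suc nat_mult_1 trans_le_add1)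
  moreover have "cg R M (a ^ (2 * n)) (a ^ n)"
  proof -
    have "n + p * (i + 1) = 2 * n" unfolding n_def by simp
    then show ?thesis using many[of n "i + 1"] \<open>n \<ge> i\<close> by (simp add: mult_2)
  qed
  ultimately show ?thesis by blast
qed

lemma ideal_basic:
  assumes O: "order_in R K" and I: "ideal_of R I"
  shows "I \<subseteq> R" "0 \<in> I" "\<And>x y. x \<in> I \<Longrightarrow> y \<in> I \<Longrightarrow> x + y \<in> I"
    "\<And>r x. r \<in> R \<Longrightarrow> x \<in> I \<Longrightarrow> r * x \<in> I"
    "\<And>x r. r \<in> R \<Longrightarrow> x \<in> I \<Longrightarrow> x * r \<in> I"
    "\<And>x. x \<in> I \<Longrightarrow> - x \<in> I"
    "\<And>x y. x \<in> I \<Longrightarrow> y \<in> I \<Longrightarrow> x - y \<in> I"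
proof -
  show 1: "I \<subseteq> R" "0 \<in> I" "\<And>x y. x \<in> I \<Longrightarrow> y \<in> I \<Longrightarrow> x + y \<in> I"
    "\<And>r x. r \<in> R \<Longrightarrow> x \<in> I \<Longrightarrow> r * x \<in> I" using I unfolding ideal_of_def by auto
  then show "\<And>x r. r \<in> R \<Longrightarrow> x \<in> I \<Longrightarrow> x * r \<in> I" by (metis mult.commute)
  show 2: "\<And>x. x \<in> I \<Longrightarrow> - x \<in> I"
    using 1(4)[OF O_uminus[OF O ring_O(2)[OF O]]] by simp
  show "\<And>x y. x \<in> I \<Longrightarrow> y \<in> I \<Longrightarrow> x - y \<in> I" using 1(3) 2 by (metis diff_conv_add_uminus)
qed

lemma ideal_one: assumes O: "order_in R K" and I: "ideal_of R I" and one: "1 \<in> I" shows "I = R"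
proof
  show "I \<subseteq> R" using ideal_basic(1)[OF O I] .
  show "R \<subseteq> I" using ideal_basic(5)[OF O I _ one] by fastforce
qed

lemma ideal_pow: "order_in R K \<Longrightarrow> ideal_of R I \<Longrightarrow> x \<in> I \<Longrightarrow> n \<ge> 1 \<Longrightarrow> x ^ n \<in> I"
proof (induction n)
  case (Suc n)
  then show ?case
    by (cases n) (auto intro: ideal_basic(4) O_pow ideal_basic(1)[THEN subsetD])
qed simp

lemma ideal_int:
  assumes O: "order_in R K" and I: "ideal_of R m" "m \<noteq> {0}"
  shows "\<exists>N::int. N > 0 \<and> of_int N \<in> m"
proof -
  obtain x where x: "x \<in> m" "x \<noteq> 0" using I ideal_basic(2)[OF O I(1)] by blast
  have xR: "x \<in> R" using x ideal_basic(1)[OF O I(1)] by blast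
  obtain D w where Dw: "D \<noteq> 0" "w \<in> R" "of_int D = x * w"
    using int_in_principal[OF O xR x(2)] by blast
  have D: "of_int D \<in> m" using Dw ideal_basic(5)[OF O I(1) Dw(2) x(1)] by simp
  show ?thesis
  proof (cases "D > 0")
    case True then show ?thesis using D by blast
  next
    case False
    then have "- D > 0" using Dw(1) by simp
    moreover have "of_int (- D) \<in> m" using ideal_basic(6)[OF O I(1) D] by simp
    ultimately show ?thesis by blast
  qed
qed

lemma prime_pow:
  assumes O: "order_in R K" and P: "prime_ideal_of R P" and x: "x \<in> R"
  shows "x ^ n \<in> P \<Longrightarrow> x \<in> P"
proof (induction n)
  case 0
  then have "P = R" using ideal_one[OF O] P unfolding prime_ideal_of_def by auto
  then show ?case using P unfolding prime_ideal_of_def by auto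
next
  case (Suc n)
  then show ?case using P x O_pow[OF O x, of n] unfolding prime_ideal_of_def by auto
qed

lemma exists_prime:
  assumes O: "order_in R K" and A: "ideal_of R A" "A \<noteq> R"
  shows "\<exists>P. prime_ideal_of R P \<and> A \<subseteq> P"
proof -
  define \<A> where "\<A> = {Q. ideal_of R Q \<and> Q \<noteq> R \<and> A \<subseteq> Q}"
  have one: "1 \<notin> Q" if "Q \<in> \<A>" for Q using that ideal_one[OF O] unfolding \<A>_def by blast
  have "\<exists>U\<in>\<A>. \<forall>X\<in>C. X \<subseteq> U" if C: "subset.chain \<A> C" for C
  proof (cases "C = {}")
    case True then show ?thesis using A unfolding \<A>_def by auto
  next
    case False
    have CA: "C \<subseteq> \<A>" and ch: "\<forall>X\<in>C. \<forall>Y\<in>C. X \<subseteq> Y \<or> Y \<subseteq> X"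
      using C by (auto simp: subset_chain_def)
    have "ideal_of R (\<Union>C)" unfolding ideal_of_def
    proof (intro conjI ballI)
      show "\<Union>C \<subseteq> R" using CA unfolding \<A>_def ideal_of_def by auto
      show "0 \<in> \<Union>C" using CA False unfolding \<A>_def ideal_of_def by auto
    next
      fix x y assume "x \<in> \<Union>C" "y \<in> \<Union>C"
      then obtain X Y where XY: "X \<in> C" "Y \<in> C" "x \<in> X" "y \<in> Y" by blast
      show "x + y \<in> \<Union>C"
      proof (cases "X \<subseteq> Y")
        case True then show ?thesis using XY CA unfolding \<A>_def ideal_of_def by blast
      next
        case False then have "Y \<subseteq> X" using ch XY by blast
        then show ?thesis using XY CA unfolding \<A>_def ideal_of_def by blast
      qed
    next
      fix r x assume "r \<in> R" "x \<in> \<Union>C"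
      then show "r * x \<in> \<Union>C" using CA unfolding \<A>_def ideal_of_def by blast
    qed
    moreover have "1 \<notin> \<Union>C" using one CA by blast
    then have "\<Union>C \<noteq> R" using ring_O(2)[OF O] by blast
    moreover have "A \<subseteq> \<Union>C" using False CA unfolding \<A>_def by blast
    ultimately show ?thesis unfolding \<A>_def by blast
  qed
  then obtain P where P: "P \<in> \<A>" and max: "\<forall>X\<in>\<A>. P \<subseteq> X \<longrightarrow> X = P"
    using subset_Zorn[of \<A>] by blast
  have PI: "ideal_of R P" and PR: "P \<noteq> R" and AP: "A \<subseteq> P" using P unfolding \<A>_def by auto
  have "x \<in> P \<or> y \<in> P" if xy: "x \<in> R" "y \<in> R" "x * y \<in> P" for x y
  proof (rule ccontr)
    assume nxy: "\<not> (x \<in> P \<or> y \<in> P)"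
    define Q where "Q = {p + r * x | p r. p \<in> P \<and> r \<in> R}"
    have QI: "ideal_of R Q" unfolding ideal_of_def Q_def
    proof (intro conjI ballI)
      show "{p + r * x | p r. p \<in> P \<and> r \<in> R} \<subseteq> R"
      proof clarify
        fix p r assume "p \<in> P" "r \<in> R"
        then show "p + r * x \<in> R" using ring_O(3)[OF O] ring_O(5)[OF O] ideal_basic(1)[OF O PI] xy(1) by blast
      qed
      show "0 \<in> {p + r * x | p r. p \<in> P \<and> r \<in> R}"
        using ideal_basic(2)[OF O PI] ring_O(1)[OF O] by force
    next
      fix a b assume "a \<in> {p + r * x | p r. p \<in> P \<and> r \<in> R}" "b \<in> {p + r * x | p r. p \<in> P \<and> r \<in> R}"
      then obtain p r p' r' where "a = p + r * x" "b = p' + r' * x" "p \<in> P" "r \<in> R" "p' \<in> P" "r' \<in> R" by blast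
      moreover have "a + b = (p + p') + (r + r') * x" using calculation by (simp add: algebra_simps)
      ultimately show "a + b \<in> {p + r * x | p r. p \<in> P \<and> r \<in> R}"
        using ideal_basic(3)[OF O PI] ring_O(3)[OF O] by blast
    next
      fix s a assume "s \<in> R" "a \<in> {p + r * x | p r. p \<in> P \<and> r \<in> R}"
      then obtain p r where "a = p + r * x" "p \<in> P" "r \<in> R" by blast
      moreover have "s * a = s * p + (s * r) * x" using calculation by (simp add: algebra_simps)
      ultimately show "s * a \<in> {p + r * x | p r. p \<in> P \<and> r \<in> R}" using \<open>s \<in> R\<close>
        using ideal_basic(4)[OF O PI] ring_O(5)[OF O] by blast
    qed
    have PQ: "P \<subseteq> Q" unfolding Q_def using ring_O(1)[OF O] by force
    have "x \<in> Q" unfolding Q_def using ideal_basic(2)[OF O PI] ring_O(2)[OF O] by force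
    then have "Q \<noteq> P" using nxy by blast
    then have "Q \<notin> \<A>" using max PQ by blast
    then have "Q = R" using QI AP PQ unfolding \<A>_def by blast
    then obtain p r where pr: "1 = p + r * x" "p \<in> P" "r \<in> R" using ring_O(2)[OF O] unfolding Q_def by force
    then have "y = y * p + r * (x * y)" by (metis mult.assoc mult.commute mult.right_neutral distrib_left)
    moreover have "y * p \<in> P" using ideal_basic(4)[OF O PI xy(2) pr(2)] .
    moreover have "r * (x * y) \<in> P" using ideal_basic(4)[OF O PI pr(3) xy(3)] .
    ultimately have "y \<in> P" using ideal_basic(3)[OF O PI] by metis
    then show False using nxy by blast
  qed
  then have "prime_ideal_of R P" using PI PR unfolding prime_ideal_of_def by blast
  then show ?thesis using AP by blast
qed

lemma set_sum_ideal:
  assumes O: "order_in R K" and A: "ideal_of R A" and B: "ideal_of R B"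
  shows "ideal_of R (set_sum A B)"
  unfolding ideal_of_def set_sum_def
proof (intro conjI ballI)
  show "{x + y |x y. x \<in> A \<and> y \<in> B} \<subseteq> R"
    using ideal_basic(1)[OF O A] ideal_basic(1)[OF O B] ring_O(3)[OF O] by blast
  show "0 \<in> {x + y |x y. x \<in> A \<and> y \<in> B}" using ideal_basic(2)[OF O A] ideal_basic(2)[OF O B] by force
next
  fix u v assume "u \<in> {x + y |x y. x \<in> A \<and> y \<in> B}" "v \<in> {x + y |x y. x \<in> A \<and> y \<in> B}"
  then obtain a b a' b' where ab: "u = a + b" "v = a' + b'" "a \<in> A" "b \<in> B" "a' \<in> A" "b' \<in> B" by blast
  then have "u + v = (a + a') + (b + b')" by simp
  then show "u + v \<in> {x + y |x y. x \<in> A \<and> y \<in> B}"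
    using ab ideal_basic(3)[OF O A] ideal_basic(3)[OF O B] by blast
next
  fix r u assume r: "r \<in> R" and "u \<in> {x + y |x y. x \<in> A \<and> y \<in> B}"
  then obtain a b where ab: "u = a + b" "a \<in> A" "b \<in> B" by blast
  then have "r * u = r * a + r * b" by (simp add: algebra_simps)
  then show "r * u \<in> {x + y |x y. x \<in> A \<and> y \<in> B}"
    using ab r ideal_basic(4)[OF O A] ideal_basic(4)[OF O B] by blast
qed

lemma set_sum_sub:
  assumes O: "order_in R K" and P: "ideal_of R P" "A \<subseteq> P" "B \<subseteq> P"
  shows "set_sum A B \<subseteq> P"
  unfolding set_sum_def using P ideal_basic(3)[OF O P(1)] by blast

lemma set_sum_left: "ideal_of R A \<Longrightarrow> order_in R K \<Longrightarrow> B \<subseteq> set_sum A B"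
  unfolding set_sum_def using ideal_basic(2) by force

lemma set_sum_right: "ideal_of R B \<Longrightarrow> order_in R K \<Longrightarrow> A \<subseteq> set_sum A B"
  unfolding set_sum_def using ideal_basic(2) by force

lemma prime_ne: "prime_ideal_of R P \<Longrightarrow> P \<noteq> R" unfolding prime_ideal_of_def by blast

lemma part1:
  assumes O: "order_in R K" and m1: "ideal_of R m1" "m1 \<noteq> {0}" and m2: "ideal_of R m2"
  shows "({P. prime_ideal_of R P \<and> m1 \<subseteq> P} \<subseteq> {P. prime_ideal_of R P \<and> m2 \<subseteq> P})
     \<longleftrightarrow> I_coprime R m2 \<subseteq> I_coprime R m1"
proof
  assume V: "{P. prime_ideal_of R P \<and> m1 \<subseteq> P} \<subseteq> {P. prime_ideal_of R P \<and> m2 \<subseteq> P}"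
  show "I_coprime R m2 \<subseteq> I_coprime R m1"
  proof
    fix a assume "a \<in> I_coprime R m2"
    then have a: "ideal_of R a" "set_sum a m2 = R" unfolding I_coprime_def by auto
    have "set_sum a m1 = R"
    proof (rule ccontr)
      assume ne: "set_sum a m1 \<noteq> R"
      obtain P where P: "prime_ideal_of R P" "set_sum a m1 \<subseteq> P"
        using exists_prime[OF O set_sum_ideal[OF O a(1) m1(1)] ne] by blast
      have PI: "ideal_of R P" using P(1) unfolding prime_ideal_of_def by blast
      have "m1 \<subseteq> P" using P(2) set_sum_left[OF a(1) O] by blast
      then have "m2 \<subseteq> P" using V P(1) by blast
      moreover have "a \<subseteq> P" using P(2) set_sum_right[OF m1(1) O] by blast
      ultimately have "set_sum a m2 \<subseteq> P" using set_sum_sub[OF O PI] by blast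
      then show False using a(2) prime_ne[OF P(1)] ideal_basic(1)[OF O PI] by blast
    qed
    then show "a \<in> I_coprime R m1" using a unfolding I_coprime_def by blast
  qed
next
  assume Isub: "I_coprime R m2 \<subseteq> I_coprime R m1"
  show "{P. prime_ideal_of R P \<and> m1 \<subseteq> P} \<subseteq> {P. prime_ideal_of R P \<and> m2 \<subseteq> P}"
  proof clarify
    fix P y assume P: "prime_ideal_of R P" "m1 \<subseteq> P" and y: "y \<in> m2"
    have PI: "ideal_of R P" using P(1) unfolding prime_ideal_of_def by blast
    show "y \<in> P"
    proof (rule ccontr)
      assume yP: "y \<notin> P"
      have yR: "y \<in> R" using y ideal_basic(1)[OF O m2] by blast
      obtain N where N: "N > 0" "of_int N \<in> m1" using ideal_int[OF O m1] by blast
      obtain n where n: "n \<ge> 1" "cg R N (y ^ (2 * n)) (y ^ n)" using idem_pow[OF O N(1) yR] by blast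
      then obtain w where w: "w \<in> R" "y ^ (2 * n) - y ^ n = of_int N * w" unfolding cg_def by blast
      have "y ^ n * (y ^ n - 1) = w * of_int N" using w(2)
        by (simp add: algebra_simps power_mult mult_2 power_add power2_eq_square)
      moreover have "w * of_int N \<in> P" using ideal_basic(4)[OF O PI w(1)] N(2) P(2) by blast
      ultimately have "y ^ n * (y ^ n - 1) \<in> P" by simp
      moreover have "y ^ n \<notin> P" using prime_pow[OF O P(1) yR] yP by blast
      moreover have "y ^ n \<in> R" "y ^ n - 1 \<in> R" using O_pow[OF O yR] ring_O(2,4)[OF O] by auto
      ultimately have e: "y ^ n - 1 \<in> P" using P(1) unfolding prime_ideal_of_def by blast
      have yn: "y ^ n \<in> m2" using ideal_pow[OF O m2 y n(1)] .
      have "set_sum P m2 = R"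
      proof
        show "set_sum P m2 \<subseteq> R" using ideal_basic(1)[OF O set_sum_ideal[OF O PI m2]] .
        show "R \<subseteq> set_sum P m2"
        proof
          fix r assume r: "r \<in> R"
          have "r = (- r) * (y ^ n - 1) + r * y ^ n" by (simp add: algebra_simps)
          moreover have "(- r) * (y ^ n - 1) \<in> P" using ideal_basic(4)[OF O PI O_uminus[OF O r] e] .
          moreover have "r * y ^ n \<in> m2" using ideal_basic(4)[OF O m2 r yn] .
          ultimately show "r \<in> set_sum P m2" unfolding set_sum_def by blast
        qed
      qed
      then have "P \<in> I_coprime R m2" using PI unfolding I_coprime_def by blast
      then have "set_sum P m1 = R" using Isub unfolding I_coprime_def by blast
      moreover have "set_sum P m1 \<subseteq> P" using set_sum_sub[OF O PI _ P(2)] by blast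
      ultimately show False using prime_ne[OF P(1)] ideal_basic(1)[OF O PI] by blast
    qed
  qed
qed

lemma sum_split_add: "(\<Sum>i<a + b. f i) = (\<Sum>i<a. f i) + (\<Sum>i<b. f (a + (i::nat))) "
  by (induction b) (simp_all add: add.assoc)

lemma fp_single: "x \<in> A \<Longrightarrow> y \<in> B \<Longrightarrow> x * y \<in> fideal_prod A B"
  unfolding fideal_prod_def
  by (rule CollectI, rule exI[of _ 1], rule exI[of _ "\<lambda>_. x"], rule exI[of _ "\<lambda>_. y"]) simp

lemma fp_add:
  assumes "p \<in> fideal_prod A B" "q \<in> fideal_prod A B"
  shows "p + q \<in> fideal_prod A B"
proof -
  obtain n1 :: nat and x1 y1 where 1: "p = (\<Sum>i<n1. x1 i * y1 i)" "\<forall>i<n1. x1 i \<in> A \<and> y1 i \<in> B"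
    using assms(1) unfolding fideal_prod_def by blast
  obtain n2 :: nat and x2 y2 where 2: "q = (\<Sum>i<n2. x2 i * y2 i)" "\<forall>i<n2. x2 i \<in> A \<and> y2 i \<in> B"
    using assms(2) unfolding fideal_prod_def by blast
  define x where "x i = (if i < n1 then x1 i else x2 (i - n1))" for i
  define y where "y i = (if i < n1 then y1 i else y2 (i - n1))" for i
  have "(\<Sum>i<n1 + n2. x i * y i) = p + q"
    unfolding sum_split_add 1 2 x_def y_def by simp
  moreover have "\<forall>i<n1 + n2. x i \<in> A \<and> y i \<in> B" using 1 2 unfolding x_def y_def by auto
  ultimately show ?thesis unfolding fideal_prod_def
    by (intro CollectI exI[of _ "n1 + n2"] exI[of _ x] exI[of _ y]) simp
qed

lemma fp_sub:
  assumes C0: "0 \<in> C" and Cadd: "\<And>a b. a \<in> C \<Longrightarrow> b \<in> C \<Longrightarrow> a + b \<in> C"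
    and AB: "\<And>x y. x \<in> A \<Longrightarrow> y \<in> B \<Longrightarrow> x * y \<in> C"
  shows "fideal_prod A B \<subseteq> C"
proof
  fix p assume "p \<in> fideal_prod A B"
  then obtain n :: nat and x y where p: "p = (\<Sum>i<n. x i * y i)" "\<forall>i<n. x i \<in> A \<and> y i \<in> B"
    unfolding fideal_prod_def by blast
  have xA: "x i \<in> A" and yB: "y i \<in> B" if "i < n" for i using p(2) that by auto
  have "(\<Sum>i<k. x i * y i) \<in> C" if "k \<le> n" for k using that
    by (induction k) (auto simp: C0 Suc_le_eq intro!: Cadd AB xA yB)
  then show "p \<in> C" using p(1) by simp
qed

definition gen2 :: "complex set \<Rightarrow> complex \<Rightarrow> complex \<Rightarrow> complex set" where
  "gen2 R g h = {g * u + h * v | u v. u \<in> R \<and> v \<in> R}"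

lemma gen2_g: "order_in R K \<Longrightarrow> u \<in> R \<Longrightarrow> g * u \<in> gen2 R g h"
  unfolding gen2_def using ring_O(1) by force

lemma gen2_h: "order_in R K \<Longrightarrow> v \<in> R \<Longrightarrow> h * v \<in> gen2 R g h"
  unfolding gen2_def using ring_O(1) by force

lemma gen2_ideal:
  assumes O: "order_in R K" and g: "g \<in> R" and h: "h \<in> R"
  shows "ideal_of R (gen2 R g h)"
  unfolding ideal_of_def
proof (intro conjI ballI)
  show "gen2 R g h \<subseteq> R" unfolding gen2_def using g h ring_O(3,5)[OF O] by blast
  show "0 \<in> gen2 R g h" using gen2_g[OF O ring_O(1)[OF O], of g h] by simp
next
  fix a b assume "a \<in> gen2 R g h" "b \<in> gen2 R g h"
  then obtain u v u' v' where uv: "a = g * u + h * v" "b = g * u' + h * v'" "u \<in> R" "v \<in> R" "u' \<in> R" "v' \<in> R"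
    unfolding gen2_def by blast
  then have "a + b = g * (u + u') + h * (v + v')" by (simp add: algebra_simps)
  then show "a + b \<in> gen2 R g h" unfolding gen2_def using uv ring_O(3)[OF O] by blast
next
  fix r a assume r: "r \<in> R" and "a \<in> gen2 R g h"
  then obtain u v where uv: "a = g * u + h * v" "u \<in> R" "v \<in> R"
    unfolding gen2_def by blast
  then have "r * a = g * (r * u) + h * (r * v)" by (simp add: algebra_simps)
  then show "r * a \<in> gen2 R g h" unfolding gen2_def using uv r ring_O(5)[OF O] by blast
qed

lemma idem_ideal:
  assumes O: "order_in R K" and M: "M > 0" and m: "ideal_of R m"
  shows "\<exists>E\<in>m. cg R M (E ^ 2) E \<and> (\<forall>a\<in>m. \<exists>k\<ge>1. cg R M (a ^ k * E) (a ^ k))"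
proof -
  have mR: "m \<subseteq> R" using ideal_basic(1)[OF O m] .
  obtain F where F: "finite F" "F \<subseteq> R" "\<forall>y\<in>R. \<exists>f\<in>F. cg R M y f"
    using finite_reps[OF O M] by blast
  define S where "S = (\<lambda>f. SOME a. a \<in> m \<and> cg R M a f) ` {f\<in>F. \<exists>a\<in>m. cg R M a f}"
  have fS: "finite S" unfolding S_def using F(1) by simp
  have Sm: "S \<subseteq> m" unfolding S_def by clarify (metis (mono_tags, lifting) someI)
  have Srep: "\<exists>s\<in>S. cg R M a s" if a: "a \<in> m" for a
  proof -
    obtain f where f: "f \<in> F" "cg R M a f" using F(3) a mR by blast
    define s where "s = (SOME a. a \<in> m \<and> cg R M a f)"
    have s: "s \<in> m \<and> cg R M s f" unfolding s_def by (rule someI_ex) (use f a in blast)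
    have "s \<in> S" unfolding S_def s_def using f a by blast
    moreover have "cg R M a s" using f(2) s cg_sym[OF O] cg_trans[OF O] by blast
    ultimately show ?thesis by blast
  qed
  have main: "\<exists>E\<in>m. cg R M (E ^ 2) E \<and> (\<forall>s\<in>T. \<exists>k\<ge>1. cg R M (s ^ k * E) (s ^ k))"
    if "finite T" "T \<subseteq> m" for T using that
  proof (induction T rule: finite_induct)
    case empty
    have "cg R M (0 ^ 2) 0" using cg_refl[OF O] by simp
    then show ?case using ideal_basic(2)[OF O m] by blast
  next
    case (insert s T)
    obtain E where E: "E \<in> m" "cg R M (E ^ 2) E" "\<forall>t\<in>T. \<exists>k\<ge>1. cg R M (t ^ k * E) (t ^ k)"
      using insert by blast
    have sR: "s \<in> R" using insert(4) mR by blast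
    have ER: "E \<in> R" using E(1) mR by blast
    obtain n where n: "n \<ge> 1" "cg R M (s ^ (2 * n)) (s ^ n)" using idem_pow[OF O M sR] by blast
    define e where "e = s ^ n"
    have em: "e \<in> m" unfolding e_def using ideal_pow[OF O m _ n(1)] insert(4) by blast
    have eR: "e \<in> R" using em mR by blast
    obtain \<alpha> where \<alpha>: "\<alpha> \<in> R" "E ^ 2 - E = of_int M * \<alpha>" using E(2) unfolding cg_def by blast
    obtain \<beta> where \<beta>: "\<beta> \<in> R" "e ^ 2 - e = of_int M * \<beta>" using n(2) unfolding cg_def e_def
      by (auto simp: power_mult[symmetric] mult.commute)
    define E' where "E' = E + e - E * e"
    have E'm: "E' \<in> m" unfolding E'_def
      using ideal_basic(3,7)[OF O m] ideal_basic(4)[OF O m ER em] E(1) em by blast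
    have "E' ^ 2 - E' = of_int M * (\<alpha> + \<beta> - E * \<beta> - \<alpha> * e + of_int M * \<alpha> * \<beta>)"
      unfolding E'_def using \<alpha>(2) \<beta>(2) by algebra
    moreover have "\<alpha> + \<beta> - E * \<beta> - \<alpha> * e + of_int M * \<alpha> * \<beta> \<in> R"
      using \<alpha>(1) \<beta>(1) ER eR O_int[OF O, of M] ring_O(3,4,5)[OF O] by metis
    ultimately have c1: "cg R M (E' ^ 2) E'" unfolding cg_def by blast
    have c2: "\<exists>k\<ge>1. cg R M (t ^ k * E') (t ^ k)" if t: "t \<in> insert s T" for t
    proof (cases "t = s")
      case True
      have "e * E' - e = of_int M * (\<beta> * (1 - E))"
        unfolding E'_def using \<beta>(2) by algebra
      then have "s ^ n * E' - s ^ n = of_int M * (\<beta> * (1 - E))" unfolding e_def by (simp add: mult.commute)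
      moreover have "\<beta> * (1 - E) \<in> R" using \<beta>(1) ER ring_O(2,4,5)[OF O] by metis
      ultimately show ?thesis using True n(1) unfolding cg_def by blast
    next
      case False
      then have "t \<in> T" using t by blast
      then obtain k \<gamma> where k: "k \<ge> 1" "\<gamma> \<in> R" "t ^ k * E - t ^ k = of_int M * \<gamma>"
        using E(3) unfolding cg_def by blast
      have "t ^ k * E' - t ^ k = (t ^ k * E - t ^ k) * (1 - e)"
        unfolding E'_def by (simp add: algebra_simps)
      then have "t ^ k * E' - t ^ k = of_int M * (\<gamma> * (1 - e))"
        using k(3) by simp
      moreover have "\<gamma> * (1 - e) \<in> R" using k(2) eR ring_O(2,4,5)[OF O] by metis
      ultimately show ?thesis using k(1) unfolding cg_def by blast
    qed
    show ?case using E'm c1 c2 by blast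
  qed
  obtain E where E: "E \<in> m" "cg R M (E ^ 2) E" "\<forall>s\<in>S. \<exists>k\<ge>1. cg R M (s ^ k * E) (s ^ k)"
    using main[OF fS Sm] by blast
  have ER: "E \<in> R" using E(1) mR by blast
  have "\<exists>k\<ge>1. cg R M (a ^ k * E) (a ^ k)" if a: "a \<in> m" for a
  proof -
    obtain s where s: "s \<in> S" "cg R M a s" using Srep[OF a] by blast
    obtain k where k: "k \<ge> 1" "cg R M (s ^ k * E) (s ^ k)" using E(3) s(1) by blast
    have aR: "a \<in> R" and sR: "s \<in> R" using a s(1) Sm mR by auto
    have p: "cg R M (a ^ k) (s ^ k)" using cg_pow[OF O aR sR s(2)] .
    have "cg R M (E * a ^ k) (E * s ^ k)" using cg_mult[OF O ER p] .
    then have "cg R M (a ^ k * E) (s ^ k * E)" by (simp add: mult.commute)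
    then have "cg R M (a ^ k * E) (s ^ k)" using k(2) cg_trans[OF O] by blast
    then have "cg R M (a ^ k * E) (a ^ k)" using cg_sym[OF O p] cg_trans[OF O] by blast
    then show ?thesis using k(1) by blast
  qed
  then show ?thesis using E(1,2) by blast
qed

lemma part3:
  assumes O: "order_in R K" and m: "ideal_of R m" "m \<noteq> {0}"
  shows "\<exists>mt. mt \<in> I_inv R \<and> mt \<subseteq> m \<and> I_coprime R m = I_coprime R mt"
proof -
  obtain N where N: "N > 0" "of_int N \<in> m" using ideal_int[OF O m] by blast
  define n where "n = (of_int N :: complex)"
  have nm: "n \<in> m" using N(2) unfolding n_def .
  have nR: "n \<in> R" unfolding n_def using O_int[OF O] .
  have n0: "n \<noteq> 0" unfolding n_def using N(1) by simp
  have M: "N * N > 0" using N(1) by simp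
  have mR: "m \<subseteq> R" using ideal_basic(1)[OF O m(1)] .
  obtain E where E: "E \<in> m" "cg R (N * N) (E ^ 2) E" "\<forall>a\<in>m. \<exists>k\<ge>1. cg R (N * N) (a ^ k * E) (a ^ k)"
    using idem_ideal[OF O M m(1)] by blast
  have ER: "E \<in> R" using E(1) mR by blast
  obtain \<sigma> where \<sigma>: "\<sigma> \<in> R" "E ^ 2 - E = n * n * \<sigma>"
    using E(2) unfolding cg_def n_def by auto
  define z where "z = n * (1 - E) + E"
  define z' where "z' = n * E + (1 - E)"
  define t where "t = 2 * n * \<sigma> - \<sigma> - n * n * \<sigma>"
  note Rc = ring_O(2,3,4,5)[OF O]
  have oneR: "1 \<in> R" using ring_O(2)[OF O] .
  have twoR: "2 \<in> R" using O_int[OF O, of 2] by simp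
  have zR: "z \<in> R" unfolding z_def by (intro Rc nR ER)
  have z'R: "z' \<in> R" unfolding z'_def by (intro Rc nR ER)
  have tR: "t \<in> R" unfolding t_def by (intro Rc nR \<sigma>(1) twoR)
  have E2: "E ^ 2 = E + n * n * \<sigma>" using \<sigma>(2) by (simp add: algebra_simps)
  have "z * z' = n * (1 - 2 * E + 2 * E ^ 2) + (1 + n * n) * (E - E ^ 2)"
    unfolding z_def z'_def by (simp add: algebra_simps power2_eq_square)
  also have "\<dots> = n * (1 + n * t)" unfolding E2 t_def by (simp add: algebra_simps)
  finally have zz: "z * z' = n * (1 + n * t)" .
  have zsum: "z + z' = n + 1" unfolding z_def z'_def by (simp add: algebra_simps)
  define I where "I = gen2 R z (n * n)"
  define J where "J = gen2 R z' (n * n)"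
  have nnR: "n * n \<in> R" by (intro Rc nR)
  have II: "ideal_of R I" unfolding I_def using gen2_ideal[OF O zR nnR] .
  have JI: "ideal_of R J" unfolding J_def using gen2_ideal[OF O z'R nnR] .
  have prod: "fideal_prod I J = principal R n"
  proof
    show "fideal_prod I J \<subseteq> principal R n"
    proof (rule fp_sub)
      show "0 \<in> principal R n" unfolding principal_def using ring_O(1)[OF O] by force
    next
      fix a b assume "a \<in> principal R n" "b \<in> principal R n"
      then obtain a' b' where "a = n * a'" "b = n * b'" "a' \<in> R" "b' \<in> R" unfolding principal_def by blast
      moreover have "n * a' + n * b' = n * (a' + b')" by (simp add: algebra_simps)
      ultimately show "a + b \<in> principal R n" unfolding principal_def using Rc by blast
    next
      fix x y assume "x \<in> I" "y \<in> J"
      then obtain u v u' v' where uv: "x = z * u + n * n * v" "y = z' * u' + n * n * v'"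
        "u \<in> R" "v \<in> R" "u' \<in> R" "v' \<in> R" unfolding I_def J_def gen2_def by blast
      define W where "W = (1 + n * t) * u * u' + n * (z * u * v' + v * z' * u' + n * n * v * v')"
      have "x * y = (z * z') * u * u' + n * (n * (z * u * v' + v * z' * u' + n * n * v * v'))"
        unfolding uv(1,2) by (simp add: algebra_simps)
      also have "\<dots> = n * W" unfolding zz W_def by (simp add: algebra_simps)
      finally have "x * y = n * W" .
      moreover have "W \<in> R" unfolding W_def by (intro Rc uv(3-6) nR tR zR z'R)
      ultimately show "x * y \<in> principal R n" unfolding principal_def by blast
    qed
  next
    show "principal R n \<subseteq> fideal_prod I J"
    proof
      fix w assume "w \<in> principal R n"
      then obtain y where y: "w = n * y" "y \<in> R" unfolding principal_def by blast
      define c where "c = - (t * y * (1 - n))"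
      have cR: "c \<in> R" unfolding c_def by (intro Rc O_uminus[OF O] tR y(2) nR)
      have tyR: "- (t * y) \<in> R" by (intro Rc O_uminus[OF O] tR y(2))
      have "z * (z' * y) + z * (n * n * c) + (n * n * c) * z' + (n * n) * (n * n * (- (t * y)))
          = (z * z') * y + n * n * c * (z + z') - n * n * n * n * t * y"
        by (simp add: algebra_simps)
      also have "\<dots> = n * y" unfolding zz zsum c_def by (simp add: algebra_simps)
      finally have eq: "n * y = z * (z' * y) + z * (n * n * c) + (n * n * c) * z' + (n * n) * (n * n * (- (t * y)))" by simp
      have zI: "z \<in> I" unfolding I_def using gen2_g[OF O oneR, of z "n * n"] by simp
      have z'J: "z' \<in> J" unfolding J_def using gen2_g[OF O oneR, of z' "n * n"] by simp
      have nnI: "n * n \<in> I" unfolding I_def using gen2_h[OF O oneR, of "n * n" z] by simp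
      have t1: "z' * y \<in> J" unfolding J_def using gen2_g[OF O y(2)] .
      have t2: "n * n * c \<in> J" unfolding J_def using gen2_h[OF O cR] .
      have t3: "n * n * c \<in> I" unfolding I_def using gen2_h[OF O cR] .
      have t4: "n * n * (- (t * y)) \<in> J" unfolding J_def using gen2_h[OF O tyR] .
      have "n * y \<in> fideal_prod I J" unfolding eq
        by (intro fp_add fp_single zI z'J nnI t1 t2 t3 t4)
      then show "w \<in> fideal_prod I J" using y(1) by simp
    qed
  qed
  have Iinv: "I \<in> I_inv R" unfolding I_inv_def
    by (rule CollectI, rule conjI[OF II], rule exI[of _ J], rule exI[of _ n]) (simp add: JI n0 prod)
  have zm: "z \<in> m" unfolding z_def
    by (intro ideal_basic(3)[OF O m(1)] ideal_basic(5)[OF O m(1) _ nm] E(1) Rc oneR ER)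
  have Im: "I \<subseteq> m"
  proof
    fix x assume "x \<in> I"
    then obtain u v where uv: "x = z * u + n * n * v" "u \<in> R" "v \<in> R" unfolding I_def gen2_def by blast
    have "z * u \<in> m" using ideal_basic(5)[OF O m(1) uv(2) zm] .
    moreover have "n * v * n \<in> m" by (intro ideal_basic(4)[OF O m(1) _ nm] Rc nR uv(3))
    moreover have "x = z * u + n * v * n" using uv(1) by (simp add: algebra_simps)
    ultimately show "x \<in> m" using ideal_basic(3)[OF O m(1)] by simp
  qed
  have nnI0: "n * n \<in> I" using gen2_h[OF O oneR, of "n * n" z] unfolding I_def by simp
  have "n * n \<noteq> 0" using n0 by simp
  then have Inz: "I \<noteq> {0}" using nnI0 by blast
  have V1: "{P. prime_ideal_of R P \<and> m \<subseteq> P} \<subseteq> {P. prime_ideal_of R P \<and> I \<subseteq> P}" using Im by blast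
  have V2: "{P. prime_ideal_of R P \<and> I \<subseteq> P} \<subseteq> {P. prime_ideal_of R P \<and> m \<subseteq> P}"
  proof clarify
    fix P a assume P: "prime_ideal_of R P" "I \<subseteq> P" and a: "a \<in> m"
    have PI: "ideal_of R P" using P(1) unfolding prime_ideal_of_def by blast
    have "n ^ 2 \<in> P" using P(2) nnI0 by (auto simp: power2_eq_square)
    then have nP: "n \<in> P" using prime_pow[OF O P(1) nR] by blast
    have "z \<in> I" using gen2_g[OF O oneR, of z "n * n"] unfolding I_def by simp
    then have zP: "z \<in> P" using P(2) by blast
    have "(1 - E) * n \<in> P" by (intro ideal_basic(4)[OF O PI _ nP] Rc oneR ER)
    then have "z - (1 - E) * n \<in> P" using ideal_basic(7)[OF O PI zP] by blast
    moreover have "z - (1 - E) * n = E" unfolding z_def by (simp add: algebra_simps)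
    ultimately have EP: "E \<in> P" by simp
    obtain k where k: "k \<ge> 1" "cg R (N * N) (a ^ k * E) (a ^ k)" using E(3) a by blast
    then obtain w where w: "w \<in> R" "a ^ k * E - a ^ k = n * n * w" unfolding cg_def n_def by auto
    have aR: "a \<in> R" using a mR by blast
    have "a ^ k * E \<in> P" using ideal_basic(4)[OF O PI O_pow[OF O aR, of k] EP] .
    moreover have "n * w * n \<in> P" by (intro ideal_basic(4)[OF O PI _ nP] Rc nR w(1))
    ultimately have "a ^ k * E - n * w * n \<in> P" using ideal_basic(7)[OF O PI] by blast
    moreover have "a ^ k * E - n * w * n = a ^ k" using w(2) by (simp add: algebra_simps)
    ultimately have "a ^ k \<in> P" by simp
    then show "a \<in> P" using prime_pow[OF O P(1) aR] by blast
  qed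
  have "I_coprime R I \<subseteq> I_coprime R m" using part1[OF O m(1) m(2) II] V1 by blast
  moreover have "I_coprime R m \<subseteq> I_coprime R I" using part1[OF O II Inz m(1)] V2 by blast
  ultimately show ?thesis using Iinv Im by blast
qed

theorem lemma5p9:
  fixes K \<O> m1 m2 :: "complex set"
  assumes "number_field K" and "order_in \<O> K"
    and "ideal_of \<O> m1" and "m1 \<noteq> {0}"
    and "ideal_of \<O> m2" and "m2 \<noteq> {0}"
  shows "({P. prime_ideal_of \<O> P \<and> m1 \<subseteq> P} \<subseteq> {P. prime_ideal_of \<O> P \<and> m2 \<subseteq> P}
            \<longleftrightarrow> I_coprime \<O> m2 \<subseteq> I_coprime \<O> m1)
    \<and> (I_coprime \<O> m2 \<subseteq> I_coprime \<O> m1 \<longrightarrow> J_coprime \<O> K m2 \<subseteq> J_coprime \<O> K m1)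
    \<and> (\<forall>m. ideal_of \<O> m \<and> m \<noteq> {0} \<longrightarrow>
         (\<exists>mt. mt \<in> I_inv \<O> \<and> mt \<subseteq> m \<and> I_coprime \<O> m = I_coprime \<O> mt
               \<and> J_coprime \<O> K m = J_coprime \<O> K mt))"
proof -
  have O: "order_in \<O> K" using assms(2) .
  have p1: "({P. prime_ideal_of \<O> P \<and> m1 \<subseteq> P} \<subseteq> {P. prime_ideal_of \<O> P \<and> m2 \<subseteq> P}
            \<longleftrightarrow> I_coprime \<O> m2 \<subseteq> I_coprime \<O> m1)"
    using part1[OF O assms(3) assms(4) assms(5)] .
  have p2: "I_coprime \<O> m2 \<subseteq> I_coprime \<O> m1 \<longrightarrow> J_coprime \<O> K m2 \<subseteq> J_coprime \<O> K m1"
    unfolding J_coprime_def by blast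
  have p3: "\<forall>m. ideal_of \<O> m \<and> m \<noteq> {0} \<longrightarrow>
         (\<exists>mt. mt \<in> I_inv \<O> \<and> mt \<subseteq> m \<and> I_coprime \<O> m = I_coprime \<O> mt
               \<and> J_coprime \<O> K m = J_coprime \<O> K mt)"
  proof (intro allI impI)
    fix m assume m: "ideal_of \<O> m \<and> m \<noteq> {0}"
    obtain mt where mt: "mt \<in> I_inv \<O>" "mt \<subseteq> m" "I_coprime \<O> m = I_coprime \<O> mt"
      using part3[OF O] m by blast
    have "J_coprime \<O> K m = J_coprime \<O> K mt" unfolding J_coprime_def using mt(3) by simp
    then show "\<exists>mt. mt \<in> I_inv \<O> \<and> mt \<subseteq> m \<and> I_coprime \<O> m = I_coprime \<O> mt
               \<and> J_coprime \<O> K m = J_coprime \<O> K mt" using mt by blast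
  qed
  show ?thesis using p1 p2 p3 by blast
qed

end
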